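(* Let $(A^{\mathbb N},\mathbb B_\Pi(A^{\mathbb N}),m,\sigma)$ be a Markov shift over $A=\{0,1,\dots,l\}$, let $\mathcal P=\{P_0,\dots,P_n\}\subset\mathbb B_\Pi(A^{\mathbb N})$ be a partition of $A^{\mathbb N}$, and let $O\in\mathbb B_\Pi(A^{\mathbb N})$ satisfy $m(O)=0$ and $\sigma^{-1}(O)=O$. Put $\widetilde{\mathcal P}=\{P\setminus O\mid P\in\mathcal P\}\cup\{O\}$. If $\widetilde{\mathcal P}$ satisfies: (i) each element of $\widetilde{\mathcal P}$ is either a subset of some cylinder $C_a$, $a\in A$, or is a $\sigma$-invariant set ($\sigma^{-1}(Q)=Q$) of measure $0$; and (ii) for any $Q_1,Q_2\in\widetilde{\mathcal P}$, either $Q_1\cap\sigma^{-1}(Q_2)=C_a\cap\sigma^{-1}(Q_2)$ for some $a\in A$, or $m(Q_1\cap\sigma^{-1}(Q_2))=0$; then $\mathcal P$ is generating and has the Markov property.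
   Context: Markov shift over $A=\{0,\dots,l\}$: given an $(l+1)\times(l+1)$ stochastic matrix $Q=(q_{ij})$ and a stationary probability vector $p$ of $Q$ with all $p_a>0$, it is $(A^{\mathbb N},\mathbb B_\Pi(A^{\mathbb N}),m,\sigma)$ with $A^{\mathbb N}$ the one-sided sequences $s=(s_0,s_1,\dots)$, $\mathbb B_\Pi$ generated by cylinders $C_{a_0\dots a_{n-1}}=\{s: s_i=a_i, i<n\}$, $(\sigma s)_j=s_{j+1}$, and $m(C_{a_0\dots a_{n-1}})=p_{a_0}q_{a_0a_1}\cdots q_{a_{n-2}a_{n-1}}$. A finite measurable partition $\mathcal G=\{G_0,\dots,G_r\}$ is generating if for every measurable $B$ there is $A'$ in the $\sigma$-algebra generated by the sets $\sigma^{-k}(G_i)$, $k\in\mathbb N_0$, with $m(A'\triangle B)=0$. A finite partition $\mathcal M=\{M_0,\dots,M_r\}$ has the Markov property if for all $n\in\mathbb N$ and $i_0,\dots,i_n$ with $m(M_{i_0}\cap\sigma^{-1}M_{i_1}\cap\dots\cap\sigma^{-(n-1)}M_{i_{n-1}})>0$, $\frac{m(M_{i_0}\cap\sigma^{-1}M_{i_1}\cap\dots\cap\sigma^{-n}M_{i_n})}{m(M_{i_0}\cap\dots\cap\sigma^{-(n-1)}M_{i_{n-1}})}=\frac{m(M_{i_{n-1}}\cap\sigma^{-1}M_{i_n})}{m(M_{i_{n-1}})}$. *)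

theory Defs
  imports "HOL-Analysis.Analysis"
begin

definition seq_space :: "nat \<Rightarrow> (nat \<Rightarrow> nat) set" where
  "seq_space l = {s. \<forall>i. s i \<le> l}"

definition cyl :: "nat \<Rightarrow> nat list \<Rightarrow> (nat \<Rightarrow> nat) set" where
  "cyl l as = {s \<in> seq_space l. \<forall>i<length as. s i = as ! i}"

definition words :: "nat \<Rightarrow> nat list set" where
  "words l = {as. \<forall>a\<in>set as. a \<le> l}"

definition shift :: "(nat \<Rightarrow> nat) \<Rightarrow> (nat \<Rightarrow> nat)" where
  "shift s = (\<lambda>j. s (Suc j))"

definition preim :: "nat \<Rightarrow> nat \<Rightarrow> (nat \<Rightarrow> nat) set \<Rightarrow> (nat \<Rightarrow> nat) set" where
  "preim l k B = {s \<in> seq_space l. (shift ^^ k) s \<in> B}"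

definition markov_cyl_weight :: "(nat \<Rightarrow> nat \<Rightarrow> real) \<Rightarrow> (nat \<Rightarrow> real) \<Rightarrow> nat list \<Rightarrow> real" where
  "markov_cyl_weight q p as = p (as ! 0) * (\<Prod>i<length as - 1. q (as ! i) (as ! Suc i))"

definition markov_shift ::
  "nat \<Rightarrow> (nat \<Rightarrow> nat \<Rightarrow> real) \<Rightarrow> (nat \<Rightarrow> real) \<Rightarrow> (nat \<Rightarrow> nat) measure \<Rightarrow> bool" where
  "markov_shift l q p M \<longleftrightarrow>
     (\<forall>i\<le>l. \<forall>j\<le>l. 0 \<le> q i j) \<and>
     (\<forall>i\<le>l. (\<Sum>j\<le>l. q i j) = 1) \<and>
     (\<forall>a\<le>l. 0 < p a) \<and> (\<Sum>a\<le>l. p a) = 1 \<and>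
     (\<forall>j\<le>l. (\<Sum>i\<le>l. p i * q i j) = p j) \<and>
     space M = seq_space l \<and>
     sets M = sigma_sets (seq_space l) (cyl l ` words l) \<and>
     (\<forall>as\<in>words l. as \<noteq> [] \<longrightarrow> emeasure M (cyl l as) = ennreal (markov_cyl_weight q p as))"

definition generating :: "nat \<Rightarrow> (nat \<Rightarrow> nat) measure \<Rightarrow> (nat \<Rightarrow> (nat \<Rightarrow> nat) set) \<Rightarrow> nat \<Rightarrow> bool" where
  "generating l M G r \<longleftrightarrow>
     (\<forall>B\<in>sets M. \<exists>A'\<in>sigma_sets (seq_space l) {preim l k (G i) | k i. i \<le> r}.
        measure M ((A' - B) \<union> (B - A')) = 0)"

definition cyl_partition :: "nat \<Rightarrow> (nat \<Rightarrow> (nat \<Rightarrow> nat) set) \<Rightarrow> (nat \<Rightarrow> nat) \<Rightarrow> nat \<Rightarrow> (nat \<Rightarrow> nat) set" where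
  "cyl_partition l P idx k = (\<Inter>j<k. preim l j (P (idx j)))"

definition markov_property :: "nat \<Rightarrow> (nat \<Rightarrow> nat) measure \<Rightarrow> (nat \<Rightarrow> (nat \<Rightarrow> nat) set) \<Rightarrow> nat \<Rightarrow> bool" where
  "markov_property l M P r \<longleftrightarrow>
     (\<forall>n\<ge>1. \<forall>idx. (\<forall>j\<le>n. idx j \<le> r) \<longrightarrow>
        measure M (cyl_partition l P idx n) > 0 \<longrightarrow>
        measure M (cyl_partition l P idx (Suc n)) / measure M (cyl_partition l P idx n)
        = measure M (P (idx (n - 1)) \<inter> preim l 1 (P (idx n))) / measure M (P (idx (n - 1))))"

end

theory Submission
  imports Defs
begin


fun qprod :: "(nat\<Rightarrow>nat\<Rightarrow>real) \<Rightarrow> nat \<Rightarrow> nat list \<Rightarrow> real" where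
  "qprod q a [] = 1" | "qprod q a (c#v) = q a c * qprod q c v"

lemma prod_qprod: "(\<Prod>i<length v. q ((a#v)!i) ((a#v)!Suc i)) = qprod q a v"
proof (induction v arbitrary: a)
  case Nil then show ?case by simp
next
  case (Cons c v)
  have "(\<Prod>i<length (c#v). q ((a#c#v)!i) ((a#c#v)!Suc i)) =
        q a c * (\<Prod>i<length v. q ((a#c#v)!Suc i) ((a#c#v)!Suc (Suc i)))"
    by (simp only: length_Cons prod.lessThan_Suc_shift) simp
  also have "\<dots> = q a c * qprod q c v" using Cons by simp
  finally show ?case by simp
qed

lemma weight_Cons: "markov_cyl_weight q p (a#v) = p a * qprod q a v"
  unfolding markov_cyl_weight_def using prod_qprod[where v=v and q=q and a=a] by simp

lemma qprod_append: "qprod q a (v @ u) = qprod q a v * qprod q (last (a#v)) u"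
  by (induction v arbitrary: a) auto

lemma qprod_nonneg: "(\<forall>i\<le>l. \<forall>j\<le>l. 0 \<le> q i j) \<Longrightarrow> a \<le> l \<Longrightarrow> v \<in> words l \<Longrightarrow> 0 \<le> qprod q a v"
  by (induction v arbitrary: a) (auto simp: words_def)

lemma funpow_shift: "(shift ^^ k) s = (\<lambda>j. s (j + k))"
  by (induction k) (auto simp: shift_def)

lemma shift_seq: "s \<in> seq_space l \<Longrightarrow> (\<lambda>j. s (j + k)) \<in> seq_space l"
  by (auto simp: seq_space_def)

lemma preim_alt: "preim l k B = {s \<in> seq_space l. (\<lambda>j. s (j + k)) \<in> B}"
  by (simp add: preim_def funpow_shift)

lemma cyl_sub: "cyl l u \<subseteq> seq_space l" by (auto simp: cyl_def)
lemma preim_sub: "preim l k B \<subseteq> seq_space l" by (auto simp: preim_def)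
lemma cyl_Nil: "cyl l [] = seq_space l" by (auto simp: cyl_def)

lemma cyl_preim_append: "cyl l u \<inter> preim l (length u) (cyl l v) = cyl l (u @ v)"
proof (intro set_eqI iffI)
  fix s assume s: "s \<in> cyl l u \<inter> preim l (length u) (cyl l v)"
  show "s \<in> cyl l (u @ v)"
    unfolding cyl_def
  proof (intro CollectI conjI allI impI)
    show "s \<in> seq_space l" using s by (auto simp: cyl_def)
    fix i assume i: "i < length (u @ v)"
    show "s i = (u @ v) ! i"
    proof (cases "i < length u")
      case True then show ?thesis using s by (auto simp: cyl_def nth_append)
    next
      case False
      then obtain j where j: "i = j + length u" by (metis add.commute le_add_diff_inverse not_less)
      then show ?thesis using s i by (auto simp: cyl_def preim_alt nth_append)
    qed
  qed
next
  fix s assume s: "s \<in> cyl l (u @ v)"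
  then have ss: "s \<in> seq_space l" by (auto simp: cyl_def)
  have 1: "s \<in> cyl l u" using s unfolding cyl_def
    by (auto simp: nth_append)
  have "\<forall>i<length v. s (i + length u) = v ! i"
  proof (intro allI impI)
    fix i assume "i < length v"
    then have "s (length u + i) = (u@v) ! (length u + i)" using s by (auto simp: cyl_def)
    then show "s (i + length u) = v ! i" by (simp add: add.commute nth_append)
  qed
  then show "s \<in> cyl l u \<inter> preim l (length u) (cyl l v)"
    using 1 ss shift_seq[OF ss] by (auto simp: preim_alt cyl_def)
qed

lemma preim_Int: "preim l k A \<inter> preim l k B = preim l k (A \<inter> B)"
  by (auto simp: preim_def)
lemma preim_empty: "preim l k {} = {}" by (auto simp: preim_def)
lemma preim_0: "preim l 0 B = seq_space l \<inter> B" by (auto simp: preim_def)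
lemma preim_seq: "preim l k (seq_space l) = seq_space l"
  using shift_seq by (auto simp: preim_alt)
lemma preim_diff: "preim l k (seq_space l - B) = seq_space l - preim l k B"
  using shift_seq by (auto simp: preim_alt)
lemma preim_UN: "preim l k (\<Union>i\<in>I. A i) = (\<Union>i\<in>I. preim l k (A i))"
  by (auto simp: preim_def)
lemma preim_preim: "preim l j (preim l k B) = preim l (k + j) B"
  using shift_seq by (auto simp: preim_alt add.assoc)

lemma cyl_single_Cons: "cyl l [b] \<inter> cyl l (c # v) = (if b = c then cyl l (c # v) else {})"
  by (auto simp: cyl_def)

lemma finite_words_len: "finite {u \<in> words l. length u = k}"
proof -
  have "{u \<in> words l. length u = k} = {xs. set xs \<subseteq> {..l} \<and> length xs = k}"
    by (auto simp: words_def)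
  then show ?thesis using finite_lists_length_eq[of "{..l}" k] by simp
qed

lemma seq_cover: "seq_space l = (\<Union>u\<in>{u \<in> words l. length u = k}. cyl l u)"
proof (intro set_eqI iffI)
  fix s assume s: "s \<in> seq_space l"
  have "map s [0..<k] \<in> {u \<in> words l. length u = k}" using s by (auto simp: words_def seq_space_def)
  moreover have "s \<in> cyl l (map s [0..<k])" using s by (auto simp: cyl_def)
  ultimately show "s \<in> (\<Union>u\<in>{u \<in> words l. length u = k}. cyl l u)" by blast
qed (auto simp: cyl_def)

lemma seq_cover1: "seq_space l = (\<Union>b\<le>l. cyl l [b])"
  by (auto simp: cyl_def seq_space_def)

lemma preim_cover: "preim l k X = (\<Union>u\<in>{u \<in> words l. length u = k}. cyl l u \<inter> preim l k X)"
  using seq_cover[of l k] preim_sub[of l k X] by blast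

lemma cyl_disj: "length u = length v \<Longrightarrow> u \<noteq> v \<Longrightarrow> cyl l u \<inter> cyl l v = {}"
  by (auto simp: cyl_def) (metis nth_equalityI)

lemma cyl_Int: "cyl l u \<inter> cyl l v \<in> {{}, cyl l u, cyl l v}"
proof (cases "\<forall>i<min (length u) (length v). u!i = v!i")
  case True
  show ?thesis
  proof (cases "length u \<le> length v")
    case True
    then have "cyl l u \<inter> cyl l v = cyl l v" using \<open>\<forall>i<_. _\<close> by (auto simp: cyl_def min_def)
    then show ?thesis by auto
  next
    case False
    then have "cyl l u \<inter> cyl l v = cyl l u" using \<open>\<forall>i<_. _\<close> by (auto simp: cyl_def min_def)
    then show ?thesis by auto
  qed
next
  case False
  then have "cyl l u \<inter> cyl l v = {}" by (auto simp: cyl_def)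
  then show ?thesis by auto
qed

lemma weight_append: "markov_cyl_weight q p ((x#w) @ v) = markov_cyl_weight q p (x#w) * qprod q (last (x#w)) v"
  by (simp add: weight_Cons qprod_append)

locale MS =
  fixes l :: nat and q :: "nat \<Rightarrow> nat \<Rightarrow> real" and p :: "nat \<Rightarrow> real"
    and M :: "(nat \<Rightarrow> nat) measure"
  assumes ms: "markov_shift l q p M"
begin

lemma q_nn: "i \<le> l \<Longrightarrow> j \<le> l \<Longrightarrow> 0 \<le> q i j" using ms by (auto simp: markov_shift_def)
lemma p_pos: "a \<le> l \<Longrightarrow> 0 < p a" using ms by (auto simp: markov_shift_def)
lemma p_sum: "(\<Sum>a\<le>l. p a) = 1" using ms by (auto simp: markov_shift_def)
lemma stat: "j \<le> l \<Longrightarrow> (\<Sum>i\<le>l. p i * q i j) = p j" using ms by (auto simp: markov_shift_def)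
lemma space_M: "space M = seq_space l" using ms by (auto simp: markov_shift_def)
lemma sets_M: "sets M = sigma_sets (seq_space l) (cyl l ` words l)" using ms by (auto simp: markov_shift_def)
lemma emeasure_cyl: "u \<in> words l \<Longrightarrow> u \<noteq> [] \<Longrightarrow> emeasure M (cyl l u) = ennreal (markov_cyl_weight q p u)"
  using ms by (auto simp: markov_shift_def)
lemma cyl_meas: "u \<in> words l \<Longrightarrow> cyl l u \<in> sets M" by (simp add: sets_M)
lemma single_words: "b \<le> l \<Longrightarrow> [b] \<in> words l" by (simp add: words_def)

lemma weight_nn: "u \<in> words l \<Longrightarrow> u \<noteq> [] \<Longrightarrow> 0 \<le> markov_cyl_weight q p u"
proof (cases u)
  case (Cons a v)
  assume "u \<in> words l"
  then have "a \<le> l" "v \<in> words l" using Cons by (auto simp: words_def)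
  then show ?thesis using Cons p_pos[of a] qprod_nonneg[of l q a v] q_nn
    by (simp add: weight_Cons)
qed simp

lemma weight_single: "markov_cyl_weight q p [b] = p b" by (simp add: weight_Cons)

lemma space_one: "emeasure M (space M) = 1"
proof -
  have "space M = (\<Union>b\<in>{..l}. cyl l [b])" using space_M seq_cover1 by simp
  moreover have "emeasure M (\<Union>b\<in>{..l}. cyl l [b]) = (\<Sum>b\<in>{..l}. emeasure M (cyl l [b]))"
    by (rule sum_emeasure[symmetric]) (auto simp: cyl_meas single_words disjoint_family_on_def cyl_disj)
  moreover have "(\<Sum>b\<in>{..l}. emeasure M (cyl l [b])) = (\<Sum>b\<in>{..l}. ennreal (p b))"
    by (rule sum.cong) (auto simp: emeasure_cyl single_words weight_single)
  moreover have "\<dots> = ennreal (\<Sum>b\<in>{..l}. p b)"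
    by (rule sum_ennreal) (auto intro: less_imp_le p_pos)
  ultimately show ?thesis using p_sum by simp
qed

sublocale finite_measure M by (rule finite_measureI) (simp add: space_one)

lemma measure_cyl: "u \<in> words l \<Longrightarrow> u \<noteq> [] \<Longrightarrow> measure M (cyl l u) = markov_cyl_weight q p u"
  by (simp add: measure_def emeasure_cyl weight_nn)

lemma seq_meas: "seq_space l \<in> sets M" by (metis sets.top space_M)

lemma preim_meas: "B \<in> sets M \<Longrightarrow> preim l k B \<in> sets M"
proof -
  assume "B \<in> sets M"
  then have "B \<in> sigma_sets (seq_space l) (cyl l ` words l)" by (simp add: sets_M)
  then show ?thesis
  proof induct
    case (Basic a)
    then obtain v where v: "v \<in> words l" "a = cyl l v" by auto
    have "preim l k a = (\<Union>u\<in>{u \<in> words l. length u = k}. cyl l u \<inter> preim l k a)"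
      by (rule preim_cover)
    also have "\<dots> = (\<Union>u\<in>{u \<in> words l. length u = k}. cyl l (u @ v))"
      using v cyl_preim_append by (intro SUP_cong) auto
    also have "\<dots> \<in> sets M"
      using v finite_words_len by (intro sets.finite_UN) (auto intro!: cyl_meas simp: words_def)
    finally show ?case .
  next
    case Empty then show ?case by (simp add: preim_empty)
  next
    case (Compl a) then show ?case using preim_diff[of l k a] seq_meas by auto
  next
    case (Union a) then show ?case using preim_UN[of l k a UNIV] by auto
  qed
qed

definition "GG = insert {} (cyl l ` words l)"

lemma GG_stable: "Int_stable GG"
  unfolding Int_stable_def GG_def using cyl_Int by fastforce

lemma sets_GG: "sets M = sigma_sets (seq_space l) GG"
  unfolding sets_M GG_def
  by (rule sigma_sets_eqI) (auto intro: sigma_sets.Basic sigma_sets.Empty)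

lemma GG_sub: "GG \<subseteq> Pow (seq_space l)" unfolding GG_def using cyl_sub by auto

lemma dynkin[consumes 1, case_names basic empty compl union]:
  assumes "B \<in> sets M"
    and "\<And>v. v \<in> words l \<Longrightarrow> P (cyl l v)" and "P {}"
    and "\<And>A. A \<in> sets M \<Longrightarrow> P A \<Longrightarrow> P (seq_space l - A)"
    and "\<And>A. disjoint_family A \<Longrightarrow> range A \<subseteq> sets M \<Longrightarrow> (\<And>i. P (A i)) \<Longrightarrow> P (\<Union>i::nat. A i)"
  shows "P B"
proof -
  have "B \<in> sigma_sets (seq_space l) GG" using assms(1) sets_GG by simp
  with GG_stable GG_sub show ?thesis
  proof (induction rule: sigma_sets_induct_disjoint)
    case (basic A) then show ?case using assms(2,3) unfolding GG_def by auto
  next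
    case empty then show ?case using assms(3) .
  next
    case (compl A) then show ?case using assms(4) sets_GG by simp
  next
    case (union A) then show ?case using assms(5) sets_GG by simp
  qed
qed

end


context MS begin

lemma inv1: "B \<in> sets M \<Longrightarrow> measure M (preim l 1 B) = measure M B"
proof (induction rule: dynkin)
  case (basic v)
  show ?case
  proof (cases v)
    case Nil then show ?thesis by (simp add: cyl_Nil preim_seq)
  next
    case (Cons c v')
    have c: "c \<le> l" "v' \<in> words l" using basic Cons by (auto simp: words_def)
    have "preim l 1 (cyl l v) = (\<Union>b\<in>{..l}. cyl l [b] \<inter> preim l 1 (cyl l v))"
      using seq_cover1[of l] preim_sub[of l 1 "cyl l v"] by blast
    also have "\<dots> = (\<Union>b\<in>{..l}. cyl l (b # v))"
      using cyl_preim_append[of l "[_]" v] by simp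
    finally have e: "preim l 1 (cyl l v) = (\<Union>b\<in>{..l}. cyl l (b # v))" .
    have "measure M (\<Union>b\<in>{..l}. cyl l (b # v)) = (\<Sum>b\<in>{..l}. measure M (cyl l (b # v)))"
    proof (rule finite_measure_finite_Union)
      show "(\<lambda>b. cyl l (b # v)) ` {..l} \<subseteq> sets M" using basic by (auto intro!: cyl_meas simp: words_def)
      show "disjoint_family_on (\<lambda>b. cyl l (b # v)) {..l}"
        by (auto simp: disjoint_family_on_def cyl_def)
    qed simp
    also have "\<dots> = (\<Sum>b\<in>{..l}. p b * q b c * qprod q c v')"
      using basic Cons by (intro sum.cong) (auto simp: measure_cyl words_def weight_Cons)
    also have "\<dots> = (\<Sum>b\<in>{..l}. p b * q b c) * qprod q c v'"
      by (simp add: sum_distrib_right)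
    also have "\<dots> = p c * qprod q c v'" using stat[OF c(1)] by simp
    also have "\<dots> = measure M (cyl l v)" using basic Cons by (simp add: measure_cyl weight_Cons)
    finally show ?thesis using e by simp
  qed
next
  case empty then show ?case by (simp add: preim_empty)
next
  case (compl A)
  have "measure M (preim l 1 (seq_space l - A)) = measure M (seq_space l - preim l 1 A)"
    by (simp add: preim_diff)
  also have "\<dots> = measure M (seq_space l) - measure M (preim l 1 A)"
    by (rule finite_measure_Diff) (auto simp: seq_meas preim_meas compl preim_sub)
  also have "\<dots> = measure M (seq_space l - A)"
    using compl sets.sets_into_space[OF compl(1)] space_M by (subst finite_measure_Diff) (auto simp: seq_meas)
  finally show ?case .
next
  case (union A)
  have "(\<lambda>i. measure M (preim l 1 (A i))) sums measure M (\<Union>i. preim l 1 (A i))"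
  proof (intro finite_measure_UNION)
    show "range (\<lambda>i. preim l 1 (A i)) \<subseteq> sets M" using union(2) by (auto intro!: preim_meas)
    show "disjoint_family (\<lambda>i. preim l 1 (A i))" using union(1) by (auto simp: disjoint_family_on_def preim_def)
  qed
  then have "(\<lambda>i. measure M (A i)) sums measure M (preim l 1 (\<Union>i. A i))"
    using union preim_UN[of l 1 A UNIV] by simp
  moreover have "(\<lambda>i. measure M (A i)) sums measure M (\<Union>i. A i)"
    using union by (intro finite_measure_UNION) auto
  ultimately show ?case using sums_unique2 by blast
qed

lemma invk: "B \<in> sets M \<Longrightarrow> measure M (preim l k B) = measure M B"
proof (induction k)
  case 0 then show ?case using sets.sets_into_space[of B M] by (simp add: preim_0 space_M Int_absorb1)
next
  case (Suc k)
  have "measure M (preim l (Suc k) B) = measure M (preim l 1 (preim l k B))"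
    using preim_preim[of l 1 k B] by simp
  also have "\<dots> = measure M (preim l k B)" using inv1[OF preim_meas[OF Suc.prems]] by simp
  finally show ?case using Suc by simp
qed

lemma L3:
  assumes u: "u0 @ [b] \<in> words l" and B: "B \<in> sets M"
  shows "measure M (cyl l (u0 @ [b]) \<inter> preim l (length u0) B) * p b
       = measure M (cyl l (u0 @ [b])) * measure M (cyl l [b] \<inter> B)"
  using B
proof (induction rule: dynkin)
  case (basic v)
  have b: "b \<le> l" using u by (auto simp: words_def)
  have cu: "cyl l (u0 @ [b]) = cyl l u0 \<inter> preim l (length u0) (cyl l [b])"
    using cyl_preim_append[of l u0 "[b]"] by simp
  show ?case
  proof (cases v)
    case Nil
    have "cyl l (u0 @ [b]) \<inter> preim l (length u0) (cyl l v) = cyl l (u0 @ [b])"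
      using Nil by (simp add: cyl_Nil preim_seq Int_absorb2 cyl_sub)
    moreover have "cyl l [b] \<inter> cyl l v = cyl l [b]" using Nil by (simp add: cyl_Nil Int_absorb2 cyl_sub)
    ultimately show ?thesis using b by (simp add: measure_cyl single_words weight_single)
  next
    case (Cons c v')
    show ?thesis
    proof (cases "c = b")
      case True
      have "cyl l (u0 @ [b]) \<inter> preim l (length u0) (cyl l v) = cyl l u0 \<inter> preim l (length u0) (cyl l [b] \<inter> cyl l v)"
        by (simp add: cu Int_assoc preim_Int)
      also have "\<dots> = cyl l (u0 @ b # v')" using True Cons cyl_single_Cons cyl_preim_append by simp
      finally have e1: "cyl l (u0 @ [b]) \<inter> preim l (length u0) (cyl l v) = cyl l (u0 @ b # v')" .
      have e2: "cyl l [b] \<inter> cyl l v = cyl l (b # v')" using True Cons cyl_single_Cons by simp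
      have w: "u0 @ b # v' \<in> words l" "b # v' \<in> words l" using u basic Cons True by (auto simp: words_def)
      obtain x w0 where xw: "u0 @ [b] = x # w0" by (cases "u0 @ [b]") auto
      have "markov_cyl_weight q p (u0 @ b # v') = markov_cyl_weight q p (u0 @ [b]) * qprod q b v'"
        using weight_append[of q p x w0 v'] xw by (metis append.assoc append_Cons append_Nil last_snoc)
      then show ?thesis using w u
        by (simp add: e1 e2 measure_cyl weight_Cons)
    next
      case False
      have "cyl l (u0 @ [b]) \<inter> preim l (length u0) (cyl l v) = cyl l u0 \<inter> preim l (length u0) (cyl l [b] \<inter> cyl l v)"
        by (simp add: cu Int_assoc preim_Int)
      also have "\<dots> = {}" using False Cons cyl_single_Cons[of l b c v'] by (simp add: preim_empty)
      finally show ?thesis using False Cons cyl_single_Cons[of l b c v'] by simp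
    qed
  qed
next
  case empty then show ?case by (simp add: preim_empty)
next
  case (compl A)
  let ?k = "length u0" and ?u = "u0 @ [b]"
  have b: "b \<le> l" using u by (auto simp: words_def)
  have seqc: "measure M (cyl l ?u \<inter> preim l ?k (seq_space l)) = measure M (cyl l ?u)"
    by (simp add: preim_seq Int_absorb2 cyl_sub)
  have "cyl l ?u \<inter> preim l ?k (seq_space l - A) = cyl l ?u - cyl l ?u \<inter> preim l ?k A"
    using cyl_sub[of l ?u] by (auto simp: preim_diff)
  then have m1: "measure M (cyl l ?u \<inter> preim l ?k (seq_space l - A)) = measure M (cyl l ?u) - measure M (cyl l ?u \<inter> preim l ?k A)"
    using compl u by (simp add: finite_measure_Diff cyl_meas preim_meas sets.Int)
  have "cyl l [b] \<inter> (seq_space l - A) = cyl l [b] - cyl l [b] \<inter> A"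
    using cyl_sub[of l "[b]"] by auto
  then have m2: "measure M (cyl l [b] \<inter> (seq_space l - A)) = p b - measure M (cyl l [b] \<inter> A)"
    using compl b by (simp add: finite_measure_Diff cyl_meas single_words sets.Int measure_cyl weight_single)
  show ?case unfolding m1 m2 left_diff_distrib right_diff_distrib compl.IH by simp
next
  case (union A)
  let ?k = "length u0" and ?u = "u0 @ [b]"
  have "(\<lambda>i. measure M (cyl l ?u \<inter> preim l ?k (A i))) sums measure M (\<Union>i. cyl l ?u \<inter> preim l ?k (A i))"
  proof (intro finite_measure_UNION)
    show "range (\<lambda>i. cyl l ?u \<inter> preim l ?k (A i)) \<subseteq> sets M" using union(2) u by (auto intro!: sets.Int cyl_meas preim_meas)
    show "disjoint_family (\<lambda>i. cyl l ?u \<inter> preim l ?k (A i))" using union(1) by (auto simp: disjoint_family_on_def preim_def)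
  qed
  moreover have "(\<Union>i. cyl l ?u \<inter> preim l ?k (A i)) = cyl l ?u \<inter> preim l ?k (\<Union>i. A i)"
    by (auto simp: preim_def)
  ultimately have s1: "(\<lambda>i. measure M (cyl l ?u \<inter> preim l ?k (A i)) * p b) sums
      (measure M (cyl l ?u \<inter> preim l ?k (\<Union>i. A i)) * p b)"
    by (metis sums_mult2)
  have "(\<lambda>i. measure M (cyl l [b] \<inter> A i)) sums measure M (\<Union>i. cyl l [b] \<inter> A i)"
  proof (intro finite_measure_UNION)
    show "range (\<lambda>i. cyl l [b] \<inter> A i) \<subseteq> sets M" using union(2) u by (auto intro!: sets.Int cyl_meas simp: words_def)
    show "disjoint_family (\<lambda>i. cyl l [b] \<inter> A i)" using union(1) by (auto simp: disjoint_family_on_def)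
  qed
  moreover have "(\<Union>i. cyl l [b] \<inter> A i) = cyl l [b] \<inter> (\<Union>i. A i)" by auto
  ultimately have s2: "(\<lambda>i. measure M (cyl l ?u) * measure M (cyl l [b] \<inter> A i)) sums
      (measure M (cyl l ?u) * measure M (cyl l [b] \<inter> (\<Union>i. A i)))"
    by (metis sums_mult)
  have "(\<lambda>i. measure M (cyl l ?u \<inter> preim l ?k (A i)) * p b) = (\<lambda>i. measure M (cyl l ?u) * measure M (cyl l [b] \<inter> A i))"
    using union.IH by (intro ext) blast
  then show ?case using s1 s2 sums_unique2 by metis
qed

end


context MS begin

lemma AE_eq_preim:
  assumes A: "A \<in> sets M" and B: "B \<in> sets M" and ae: "AE x in M. (x\<in>A) = (x\<in>B)"
  shows "AE x in M. (x \<in> preim l k A) = (x \<in> preim l k B)"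
proof -
  let ?N = "(A - B) \<union> (B - A)"
  have N: "?N \<in> sets M" using A B by auto
  have sp: "{x\<in>space M. \<not> ((x\<in>A) = (x\<in>B))} = ?N"
    using sets.sets_into_space[OF A] sets.sets_into_space[OF B] by blast
  have "emeasure M ?N = 0" by (rule AE_iff_measurable[OF N sp, THEN iffD1, OF ae])
  then have "measure M ?N = 0" by (simp add: measure_def)
  then have "measure M (preim l k ?N) = 0" using invk[OF N] by simp
  then have e0: "emeasure M (preim l k ?N) = 0" using emeasure_eq_measure by simp
  have sp2: "{x\<in>space M. \<not> ((x \<in> preim l k A) = (x \<in> preim l k B))} = preim l k ?N"
    by (auto simp: preim_def space_M)
  show ?thesis by (rule AE_iff_measurable[OF preim_meas[OF N] sp2, THEN iffD2, OF e0])
qed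

lemma measure_AE0: "N \<in> sets M \<Longrightarrow> AE x in M. x \<notin> N \<Longrightarrow> measure M N = 0"
proof -
  assume N: "N \<in> sets M" and ae: "AE x in M. x \<notin> N"
  have spN: "{x\<in>space M. \<not> x \<notin> N} = N" using sets.sets_into_space[OF N] by blast
  have "emeasure M N = 0" by (rule AE_iff_measurable[OF N spN, THEN iffD1, OF ae])
  then show ?thesis by (simp add: measure_def)
qed

lemma AE0_measure: "N \<in> sets M \<Longrightarrow> measure M N = 0 \<Longrightarrow> AE x in M. x \<notin> N"
  by (intro AE_not_in) (simp add: null_sets_def emeasure_eq_measure)

lemma keyK:
  assumes w: "w \<in> words l" and b: "b \<le> l" and Y: "Y \<in> sets M"
    and ae: "AE x in M. x \<in> Y \<longrightarrow> x \<in> cyl l [b]"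
  shows "measure M (cyl l w \<inter> preim l (length w) Y) * p b = measure M (cyl l (w @ [b])) * measure M Y"
proof -
  have cb: "cyl l [b] \<in> sets M" using b by (simp add: cyl_meas single_words)
  have wb: "w @ [b] \<in> words l" using w b by (simp add: words_def)
  have ae1: "AE x in M. (x \<in> Y) = (x \<in> cyl l [b] \<inter> Y)" using ae by eventually_elim auto
  have ae2: "AE x in M. (x \<in> preim l (length w) Y) = (x \<in> preim l (length w) (cyl l [b] \<inter> Y))"
    by (rule AE_eq_preim[OF Y _ ae1]) (use cb Y in auto)
  have e: "cyl l w \<inter> preim l (length w) (cyl l [b] \<inter> Y) = cyl l (w @ [b]) \<inter> preim l (length w) Y"
    using cyl_preim_append[of l w "[b]"] preim_Int[of l "length w" "cyl l [b]" Y] by blast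
  have "measure M (cyl l w \<inter> preim l (length w) Y) = measure M (cyl l (w @ [b]) \<inter> preim l (length w) Y)"
    unfolding e[symmetric]
    by (rule measure_eq_AE) (use ae2 w cb Y in \<open>auto intro!: sets.Int cyl_meas preim_meas\<close>)
  also have "\<dots> * p b = measure M (cyl l (w @ [b])) * measure M (cyl l [b] \<inter> Y)"
    using L3[OF wb Y] by simp
  also have "measure M (cyl l [b] \<inter> Y) = measure M Y"
    by (rule measure_eq_AE) (use ae1 cb Y in auto)
  finally show ?thesis .
qed

lemma cp_Suc: "cyl_partition l P idx (Suc m) = cyl_partition l P idx m \<inter> preim l m (P (idx m))"
  by (auto simp: cyl_partition_def lessThan_Suc)

lemma cp_meas:
  assumes "\<And>j. j \<le> m \<Longrightarrow> P (idx j) \<in> sets M"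
  shows "cyl_partition l P idx (Suc m) \<in> sets M"
  using assms
proof (induction m)
  case 0 then show ?case by (simp add: cyl_partition_def lessThan_Suc preim_meas)
next
  case (Suc m) then show ?case by (subst cp_Suc) (auto intro!: sets.Int preim_meas)
qed

lemma reduction:
  assumes Pm: "\<And>i. i \<le> n \<Longrightarrow> P i \<in> sets M"
    and Pc: "\<And>i i'. i\<le>n \<Longrightarrow> i'\<le>n \<Longrightarrow>
      (\<exists>a\<le>l. AE x in M. (x \<in> P i \<inter> preim l 1 (P i')) = (x \<in> cyl l [a] \<inter> preim l 1 (P i')))
      \<or> (AE x in M. x \<notin> P i \<inter> preim l 1 (P i'))"
    and idx: "\<And>j. j \<le> k \<Longrightarrow> idx j \<le> n"
  shows "(AE x in M. x \<notin> cyl_partition l P idx (Suc k)) \<or>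
    (\<exists>w\<in>words l. length w = k \<and>
      (AE x in M. (x \<in> cyl_partition l P idx (Suc k)) = (x \<in> cyl l w \<inter> preim l k (P (idx k)))))"
  using idx
proof (induction k)
  case 0
  show ?case
    by (intro disjI2 bexI[of _ "[]"]) (auto simp: cyl_partition_def cyl_Nil preim_0 words_def)
next
  case (Suc k)
  let ?i = "idx k" and ?i' = "idx (Suc k)"
  have ik: "?i \<le> n" "?i' \<le> n" using Suc.prems by auto
  from Suc.IH Suc.prems have IH: "(AE x in M. x \<notin> cyl_partition l P idx (Suc k)) \<or>
    (\<exists>w\<in>words l. length w = k \<and>
      (AE x in M. (x \<in> cyl_partition l P idx (Suc k)) = (x \<in> cyl l w \<inter> preim l k (P ?i))))" by auto
  have cps: "cyl_partition l P idx (Suc (Suc k)) = cyl_partition l P idx (Suc k) \<inter> preim l (Suc k) (P ?i')"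
    by (rule cp_Suc)
  let ?Z = "P ?i \<inter> preim l 1 (P ?i')"
  have Zm: "?Z \<in> sets M" using ik Pm by (auto intro!: sets.Int preim_meas)
  have pZ: "preim l k ?Z = preim l k (P ?i) \<inter> preim l (Suc k) (P ?i')"
    using preim_Int[of l k "P ?i" "preim l 1 (P ?i')"] preim_preim[of l k 1 "P ?i'"] by simp
  from IH show ?case
  proof
    assume "AE x in M. x \<notin> cyl_partition l P idx (Suc k)"
    then have "AE x in M. x \<notin> cyl_partition l P idx (Suc (Suc k))"
      unfolding cps by eventually_elim auto
    then show ?thesis by blast
  next
    assume "\<exists>w\<in>words l. length w = k \<and>
      (AE x in M. (x \<in> cyl_partition l P idx (Suc k)) = (x \<in> cyl l w \<inter> preim l k (P ?i)))"
    then obtain w where w: "w \<in> words l" "length w = k"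
      and aw: "AE x in M. (x \<in> cyl_partition l P idx (Suc k)) = (x \<in> cyl l w \<inter> preim l k (P ?i))"
      by blast
    have aw2: "AE x in M. (x \<in> cyl_partition l P idx (Suc (Suc k))) = (x \<in> cyl l w \<inter> preim l k ?Z)"
      using aw unfolding cps pZ by eventually_elim auto
    from Pc[OF ik] show ?thesis
    proof
      assume "\<exists>a\<le>l. AE x in M. (x \<in> ?Z) = (x \<in> cyl l [a] \<inter> preim l 1 (P ?i'))"
      then obtain a where a: "a \<le> l" and aa: "AE x in M. (x \<in> ?Z) = (x \<in> cyl l [a] \<inter> preim l 1 (P ?i'))"
        by blast
      have ca: "cyl l [a] \<inter> preim l 1 (P ?i') \<in> sets M"
        using a ik Pm by (auto intro!: sets.Int preim_meas cyl_meas simp: single_words)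
      have ab: "AE x in M. (x \<in> preim l k ?Z) = (x \<in> preim l k (cyl l [a] \<inter> preim l 1 (P ?i')))"
        by (rule AE_eq_preim[OF Zm ca aa])
      have e: "cyl l w \<inter> preim l k (cyl l [a] \<inter> preim l 1 (P ?i')) = cyl l (w @ [a]) \<inter> preim l (Suc k) (P ?i')"
        using cyl_preim_append[of l w "[a]"] w(2)
          preim_Int[of l k "cyl l [a]" "preim l 1 (P ?i')"] preim_preim[of l k 1 "P ?i'"] by auto
      have ae3: "AE x in M. (x \<in> cyl_partition l P idx (Suc (Suc k))) = (x \<in> cyl l (w @ [a]) \<inter> preim l (Suc k) (P ?i'))"
        using aw2 ab unfolding e[symmetric] by eventually_elim auto
      have wa: "w @ [a] \<in> words l" using w a by (simp add: words_def)
      show ?thesis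
        by (intro disjI2 bexI[of _ "w @ [a]"] conjI) (use ae3 wa w in simp_all)
    next
      assume z: "AE x in M. x \<notin> ?Z"
      have "AE x in M. (x \<in> preim l k ?Z) = (x \<in> preim l k {})"
        by (rule AE_eq_preim[OF Zm]) (use z in auto)
      then have "AE x in M. x \<notin> cyl_partition l P idx (Suc (Suc k))"
        using aw2 by eventually_elim (auto simp: preim_empty)
      then show ?thesis by blast
    qed
  qed
qed

end



theorem corollary3:
  fixes l n :: nat and q :: "nat \<Rightarrow> nat \<Rightarrow> real" and p :: "nat \<Rightarrow> real"
    and M :: "(nat \<Rightarrow> nat) measure"
    and P :: "nat \<Rightarrow> (nat \<Rightarrow> nat) set" and N0 :: "(nat \<Rightarrow> nat) set"
  assumes ms: "markov_shift l q p M"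
    and P_meas: "\<forall>i\<le>n. P i \<in> sets M"
    and P_disj: "\<forall>i\<le>n. \<forall>j\<le>n. i \<noteq> j \<longrightarrow> P i \<inter> P j = {}"
    and P_cover: "(\<Union>i\<le>n. P i) = seq_space l"
    and O_meas: "N0 \<in> sets M" and O_null: "measure M N0 = 0"
    and O_inv: "preim l 1 N0 = N0"
    and cond_i: "\<forall>Q\<in>{P i - N0 | i. i \<le> n} \<union> {N0}.
        (\<exists>a\<le>l. Q \<subseteq> cyl l [a]) \<or> (preim l 1 Q = Q \<and> measure M Q = 0)"
    and cond_ii: "\<forall>Q1\<in>{P i - N0 | i. i \<le> n} \<union> {N0}. \<forall>Q2\<in>{P i - N0 | i. i \<le> n} \<union> {N0}.
        (\<exists>a\<le>l. Q1 \<inter> preim l 1 Q2 = cyl l [a] \<inter> preim l 1 Q2) \<or>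
        measure M (Q1 \<inter> preim l 1 Q2) = 0"
  shows "generating l M P n \<and> markov_property l M P n"
proof -
  interpret MS l q p M by (rule MS.intro) (rule ms)
  have Pm: "\<And>i. i \<le> n \<Longrightarrow> P i \<in> sets M" using P_meas by auto
  have N0ae: "AE x in M. x \<notin> N0" using AE0_measure[OF O_meas O_null] .
  have Pb: "\<exists>b\<le>l. AE x in M. x \<in> P i \<longrightarrow> x \<in> cyl l [b]" if i: "i \<le> n" for i
  proof -
    have "P i - N0 \<in> {P i - N0 | i. i \<le> n} \<union> {N0}" using i by blast
    with cond_i have "(\<exists>a\<le>l. P i - N0 \<subseteq> cyl l [a]) \<or>
        (preim l 1 (P i - N0) = P i - N0 \<and> measure M (P i - N0) = 0)" by blast
    then show ?thesis
    proof
      assume "\<exists>a\<le>l. P i - N0 \<subseteq> cyl l [a]"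
      then obtain a where a: "a \<le> l" "P i - N0 \<subseteq> cyl l [a]" by blast
      have "AE x in M. x \<in> P i \<longrightarrow> x \<in> cyl l [a]" using N0ae by eventually_elim (use a(2) in auto)
      then show ?thesis using a(1) by (intro exI[of _ a] conjI)
    next
      assume "preim l 1 (P i - N0) = P i - N0 \<and> measure M (P i - N0) = 0"
      then have "AE x in M. x \<notin> P i - N0"
        by (intro AE0_measure) (use Pm[OF i] O_meas in auto)
      then have "AE x in M. x \<in> P i \<longrightarrow> x \<in> cyl l [0]" using N0ae by eventually_elim auto
      then show ?thesis by (intro exI[of _ 0] conjI) auto
    qed
  qed
  have Pc: "(\<exists>a\<le>l. AE x in M. (x \<in> P i \<inter> preim l 1 (P i')) = (x \<in> cyl l [a] \<inter> preim l 1 (P i')))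
      \<or> (AE x in M. x \<notin> P i \<inter> preim l 1 (P i'))" if i: "i \<le> n" "i' \<le> n" for i i'
  proof -
    have Q: "P i - N0 \<in> {P i - N0 | i. i \<le> n} \<union> {N0}" "P i' - N0 \<in> {P i - N0 | i. i \<le> n} \<union> {N0}"
      using i by blast+
    have "preim l 1 (P i' - N0) = preim l 1 (P i') - preim l 1 N0" by (auto simp: preim_def)
    then have pre: "preim l 1 (P i' - N0) = preim l 1 (P i') - N0" using O_inv by simp
    from cond_ii Q have "(\<exists>a\<le>l. (P i - N0) \<inter> preim l 1 (P i' - N0) = cyl l [a] \<inter> preim l 1 (P i' - N0))
        \<or> measure M ((P i - N0) \<inter> preim l 1 (P i' - N0)) = 0" by blast
    then show ?thesis
    proof
      assume "\<exists>a\<le>l. (P i - N0) \<inter> preim l 1 (P i' - N0) = cyl l [a] \<inter> preim l 1 (P i' - N0)"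
      then obtain a where a: "a \<le> l"
        and e: "(P i - N0) \<inter> preim l 1 (P i' - N0) = cyl l [a] \<inter> preim l 1 (P i' - N0)" by blast
      have e2: "(x \<in> P i \<inter> preim l 1 (P i')) = (x \<in> cyl l [a] \<inter> preim l 1 (P i'))" if "x \<notin> N0" for x
      proof -
        have "(x \<in> (P i - N0) \<inter> preim l 1 (P i' - N0)) = (x \<in> cyl l [a] \<inter> preim l 1 (P i' - N0))"
          using e by simp
        then show ?thesis using that unfolding pre by simp
      qed
      have "AE x in M. (x \<in> P i \<inter> preim l 1 (P i')) = (x \<in> cyl l [a] \<inter> preim l 1 (P i'))"
        using N0ae by eventually_elim (rule e2)
      then show ?thesis using a by (intro disjI1 exI[of _ a] conjI)
    next
      assume m0: "measure M ((P i - N0) \<inter> preim l 1 (P i' - N0)) = 0"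
      have meas: "(P i - N0) \<inter> preim l 1 (P i' - N0) \<in> sets M"
        using i by (auto intro!: sets.Int sets.Diff preim_meas Pm O_meas)
      have "AE x in M. x \<notin> (P i - N0) \<inter> preim l 1 (P i' - N0)" by (rule AE0_measure[OF meas m0])
      then have "AE x in M. x \<notin> P i \<inter> preim l 1 (P i')" using N0ae unfolding pre by eventually_elim auto
      then show ?thesis by (rule disjI2)
    qed
  qed
  have markov: "markov_property l M P n"
    unfolding markov_property_def
  proof (intro allI impI)
    fix m idx assume m: "1 \<le> m" and idx: "\<forall>j\<le>m. idx j \<le> n"
      and pos: "0 < measure M (cyl_partition l P idx m)"
    obtain k where mk: "m = Suc k" using m by (cases m) auto
    have idxk: "\<And>j. j \<le> k \<Longrightarrow> idx j \<le> n" using idx mk by auto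
    have ik: "idx k \<le> n" "idx (Suc k) \<le> n" using idx mk by auto
    have Xm: "cyl_partition l P idx (Suc k) \<in> sets M" by (rule cp_meas) (use idxk Pm in auto)
    have Xm1: "cyl_partition l P idx (Suc (Suc k)) \<in> sets M" by (rule cp_meas) (use idx mk Pm in auto)
    have red: "(AE x in M. x \<notin> cyl_partition l P idx (Suc k)) \<or>
      (\<exists>w\<in>words l. length w = k \<and>
        (AE x in M. (x \<in> cyl_partition l P idx (Suc k)) = (x \<in> cyl l w \<inter> preim l k (P (idx k)))))"
      by (rule reduction[where n=n]) (use Pm Pc idxk in auto)
    have "\<not> (AE x in M. x \<notin> cyl_partition l P idx (Suc k))"
      using measure_AE0[OF Xm] pos mk by auto
    with red obtain w where w: "w \<in> words l" "length w = k"
      and aw: "AE x in M. (x \<in> cyl_partition l P idx (Suc k)) = (x \<in> cyl l w \<inter> preim l k (P (idx k)))"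
      by blast
    let ?Y = "P (idx k)" and ?Z = "P (idx k) \<inter> preim l 1 (P (idx (Suc k)))"
    have Ym: "?Y \<in> sets M" using Pm ik by auto
    have Zm: "?Z \<in> sets M" using Pm ik by (auto intro!: sets.Int preim_meas)
    have pZ: "preim l k ?Z = preim l k ?Y \<inter> preim l (Suc k) (P (idx (Suc k)))"
      using preim_Int[of l k ?Y "preim l 1 (P (idx (Suc k)))"] preim_preim[of l k 1 "P (idx (Suc k))"] by simp
    have aw2: "AE x in M. (x \<in> cyl_partition l P idx (Suc (Suc k))) = (x \<in> cyl l w \<inter> preim l k ?Z)"
      using aw unfolding cp_Suc[of P idx "Suc k"] pZ by eventually_elim auto
    have cwm: "cyl l w \<in> sets M" using w by (simp add: cyl_meas)
    have mX: "measure M (cyl_partition l P idx (Suc k)) = measure M (cyl l w \<inter> preim l k ?Y)"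
      by (rule measure_eq_AE[OF aw Xm]) (use cwm Ym in \<open>auto intro!: sets.Int preim_meas\<close>)
    have mX1: "measure M (cyl_partition l P idx (Suc (Suc k))) = measure M (cyl l w \<inter> preim l k ?Z)"
      by (rule measure_eq_AE[OF aw2 Xm1]) (use cwm Zm in \<open>auto intro!: sets.Int preim_meas\<close>)
    obtain b where b: "b \<le> l" and bY: "AE x in M. x \<in> ?Y \<longrightarrow> x \<in> cyl l [b]" using Pb[OF ik(1)] by blast
    have bZ: "AE x in M. x \<in> ?Z \<longrightarrow> x \<in> cyl l [b]" using bY by eventually_elim auto
    have K1: "measure M (cyl l w \<inter> preim l k ?Y) * p b = measure M (cyl l (w @ [b])) * measure M ?Y"
      using keyK[OF w(1) b Ym bY] w(2) by simp
    have K2: "measure M (cyl l w \<inter> preim l k ?Z) * p b = measure M (cyl l (w @ [b])) * measure M ?Z"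
      using keyK[OF w(1) b Zm bZ] w(2) by simp
    have pb: "0 < p b" using p_pos[OF b] .
    define c where "c = measure M (cyl l (w @ [b]))"
    define A1 where "A1 = measure M (cyl_partition l P idx (Suc k))"
    define A2 where "A2 = measure M (cyl_partition l P idx (Suc (Suc k)))"
    have E1: "A1 * p b = c * measure M ?Y" using K1 mX unfolding A1_def c_def by simp
    have E2: "A2 * p b = c * measure M ?Z" using K2 mX1 unfolding A2_def c_def by simp
    have A1p: "0 < A1" using pos mk unfolding A1_def by simp
    have "0 < c * measure M ?Y" using E1 A1p pb by (metis mult_pos_pos)
    then have c0: "c \<noteq> 0" and y0: "measure M ?Y \<noteq> 0" by auto
    have "A2 / A1 = measure M ?Z / measure M ?Y"
    proof -
      have a1: "A1 = c * measure M ?Y / p b" using E1 pb by (simp add: field_simps)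
      have a2: "A2 = c * measure M ?Z / p b" using E2 pb by (simp add: field_simps)
      show ?thesis unfolding a1 a2 using c0 y0 pb by (simp add: field_simps)
    qed
    then show "measure M (cyl_partition l P idx (Suc m)) / measure M (cyl_partition l P idx m) =
        measure M (P (idx (m - 1)) \<inter> preim l 1 (P (idx m))) / measure M (P (idx (m - 1)))"
      unfolding A1_def A2_def mk by simp
  qed
  have gen: "generating l M P n"
  proof -
    define GS where "GS = {preim l k (P i) | k i. i \<le> n}"
    define G where "G = sigma_sets (seq_space l) GS"
    have GSsub: "GS \<subseteq> Pow (seq_space l)" unfolding GS_def using preim_sub by auto
    interpret G: sigma_algebra "seq_space l" G unfolding G_def by (rule sigma_algebra_sigma_sets[OF GSsub])
    have GSM: "GS \<subseteq> sets M" unfolding GS_def using Pm preim_meas by auto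
    have GM: "G \<subseteq> sets M" unfolding G_def using sets.sigma_sets_subset[OF GSM] space_M by simp
    have GSG: "GS \<subseteq> G" unfolding G_def by (auto intro: sigma_sets.Basic)
    have "\<forall>i. \<exists>b. i \<le> n \<longrightarrow> b \<le> l \<and> (AE x in M. x \<in> P i \<longrightarrow> x \<in> cyl l [b])" using Pb by blast
    then obtain bb where bb: "\<And>i. i \<le> n \<Longrightarrow> bb i \<le> l \<and> (AE x in M. x \<in> P i \<longrightarrow> x \<in> cyl l [bb i])"
      by metis
    define AA where "AA a = (\<Union>i\<in>{i. i \<le> n \<and> bb i = a}. P i)" for a
    have finS: "finite {i. i \<le> n \<and> bb i = a}" for a by (rule finite_subset[of _ "{..n}"]) auto
    have AAm: "AA a \<in> sets M" for a unfolding AA_def by (rule sets.finite_UN[OF finS]) (auto intro: Pm)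
    have preimAA: "preim l j (AA a) \<in> G" for j a
    proof -
      have "preim l j (AA a) = (\<Union>i\<in>{i. i \<le> n \<and> bb i = a}. preim l j (P i))"
        unfolding AA_def by (rule preim_UN)
      also have "\<dots> \<in> G" using GSG by (intro G.finite_UN[OF finS]) (auto simp: GS_def)
      finally show ?thesis .
    qed
    have aeAA: "AE x in M. (x \<in> AA a) = (x \<in> cyl l [a])" for a
    proof -
      have "AE x in M. \<forall>i\<in>{..n}. x \<in> P i \<longrightarrow> x \<in> cyl l [bb i]" by (rule AE_finite_allI) (use bb in auto)
      then show ?thesis
      proof eventually_elim
        case (elim x)
        show ?case
        proof
          assume "x \<in> AA a" then obtain i where "i \<le> n" "bb i = a" "x \<in> P i" unfolding AA_def by blast
          then show "x \<in> cyl l [a]" using elim by auto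
        next
          assume xa: "x \<in> cyl l [a]"
          then have "x \<in> seq_space l" using cyl_sub by blast
          then obtain i where i: "i \<le> n" "x \<in> P i" using P_cover by blast
          then have "x \<in> cyl l [bb i]" using elim by auto
          with xa have "bb i = a" by (auto simp: cyl_def)
          then show "x \<in> AA a" using i unfolding AA_def by blast
        qed
      qed
    qed
    have cylG: "\<exists>A'\<in>G. AE x in M. (x \<in> A') = (x \<in> cyl l w)" if w: "w \<in> words l" for w
    proof (cases "w = []")
      case True then show ?thesis by (intro bexI[of _ "seq_space l"]) (auto simp: cyl_Nil)
    next
      case False
      have ce: "cyl l w = (\<Inter>j\<in>{..<length w}. preim l j (cyl l [w!j]))"
      proof (intro set_eqI iffI)
        fix s assume "s \<in> cyl l w"
        then show "s \<in> (\<Inter>j\<in>{..<length w}. preim l j (cyl l [w!j]))"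
          using shift_seq by (auto simp: cyl_def preim_alt)
      next
        fix s assume s: "s \<in> (\<Inter>j\<in>{..<length w}. preim l j (cyl l [w!j]))"
        have "0 < length w" using False by simp
        then have "s \<in> seq_space l" using s by (auto simp: preim_alt)
        then show "s \<in> cyl l w" using s by (auto simp: cyl_def preim_alt)
      qed
      have wl: "\<And>j. j < length w \<Longrightarrow> w!j \<le> l" using w by (auto simp: words_def)
      have "AE x in M. \<forall>j\<in>{..<length w}. (x \<in> preim l j (AA (w!j))) = (x \<in> preim l j (cyl l [w!j]))"
      proof (rule AE_finite_allI)
        fix j assume "j \<in> {..<length w}"
        then have "cyl l [w!j] \<in> sets M" using wl by (auto intro!: cyl_meas simp: single_words)
        then show "AE x in M. (x \<in> preim l j (AA (w!j))) = (x \<in> preim l j (cyl l [w!j]))"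
          by (intro AE_eq_preim AAm aeAA)
      qed simp
      then have "AE x in M. (x \<in> (\<Inter>j\<in>{..<length w}. preim l j (AA (w!j)))) = (x \<in> cyl l w)"
        unfolding ce by eventually_elim auto
      moreover have "(\<Inter>j\<in>{..<length w}. preim l j (AA (w!j))) \<in> G"
        by (rule G.finite_INT) (use False preimAA in auto)
      ultimately show ?thesis by blast
    qed
    have main: "\<exists>A'\<in>G. AE x in M. (x \<in> A') = (x \<in> B)" if B: "B \<in> sets M" for B
    proof -
      from B have "B \<in> sigma_sets (seq_space l) (cyl l ` words l)" by (simp add: sets_M)
      then show ?thesis
      proof induct
        case (Basic a) then show ?case using cylG by auto
      next
        case Empty then show ?case by (intro bexI[of _ "{}"]) auto
      next
        case (Compl a)
        then obtain A' where A': "A' \<in> G" "AE x in M. (x \<in> A') = (x \<in> a)" by blast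
        have "AE x in M. (x \<in> seq_space l - A') = (x \<in> seq_space l - a)"
          using A'(2) AE_space by eventually_elim (auto simp: space_M)
        moreover have "seq_space l - A' \<in> G" using A'(1) by auto
        ultimately show ?case by blast
      next
        case (Union a)
        then have "\<forall>i. \<exists>A'. A' \<in> G \<and> (AE x in M. (x \<in> A') = (x \<in> a i))" by blast
        then obtain f where f: "\<And>i. f i \<in> G" "\<And>i. AE x in M. (x \<in> f i) = (x \<in> a i)" by metis
        have "AE x in M. \<forall>i. (x \<in> f i) = (x \<in> a i)" using f(2) by (simp add: AE_all_countable)
        then have "AE x in M. (x \<in> (\<Union>i. f i)) = (x \<in> (\<Union>i. a i))" by eventually_elim auto
        moreover have "(\<Union>i. f i) \<in> G" using f(1) by (intro G.countable_UN) auto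
        ultimately show ?case by blast
      qed
    qed
    show ?thesis unfolding generating_def
    proof
      fix B assume B: "B \<in> sets M"
      obtain A' where A': "A' \<in> G" "AE x in M. (x \<in> A') = (x \<in> B)" using main[OF B] by blast
      have A'm: "A' \<in> sets M" using A' GM by auto
      have "AE x in M. x \<notin> (A' - B) \<union> (B - A')" using A'(2) by eventually_elim auto
      then have "measure M ((A' - B) \<union> (B - A')) = 0" by (intro measure_AE0) (use A'm B in auto)
      then show "\<exists>A'\<in>sigma_sets (seq_space l) {preim l k (P i) |k i. i \<le> n}. measure M ((A' - B) \<union> (B - A')) = 0"
        using A'(1) unfolding G_def GS_def by blast
    qed
  qed
  show ?thesis using gen markov by blast
qed


end
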